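(* Let $\kappa$ be a cardinal with $\kappa=\beth_\kappa$, let $\tau$ be a relational vocabulary with $|\tau|<\kappa$ and let $\beta$ be an ordinal. Then the relation between $\tau$-structures "$M$ and $N$ are such that player II has a winning strategy in $EF^{1,c,\beta}_\kappa(M,N)$" is transitive.
   Context: The game $EF^{1,c,\beta}_{\le\theta}(M,N)$ for a cardinal $\theta$: rounds $k=0,1,\dots$ with $\beta_{-1}=\beta$, $\pi_{-1}=\emptyset$; in round $k$, player I chooses an ordinal $\beta_k<\beta_{k-1}$ and a set $A_k$ of size $\le\theta$ contained in $M$ or in $N$; player II chooses $f_k:A_k\to\omega$; I chooses $n_k<\omega$; II must choose a partial isomorphism $\pi_k\supseteq\pi_{k-1}$ from $M$ to $N$ whose domain (if $A_k\subseteq M$), resp. range (if $A_k\subseteq N$), contains $f_k^{-1}(n_k)$. The play ends after the round in which $\beta_k=0$; II wins if she can always make her moves. The game $EF^{1,c,\beta}_\kappa(M,N)$: I first chooses a cardinal $\theta<\kappa$, then $EF^{1,c,\beta}_{\le\theta}(M,N)$ is played. *)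

theory Defs
  imports Main
begin

text \<open>Cardinals are represented as cardinalities of sets (card_of A, compared with
  ordLeq2 / ordLess2 / ordIso2 from the BNF cardinal library in Main).
  Ordinals are represented by elements of well-ordered types, or by well-order relations.\<close>

definition wo_lt :: "'i rel \<Rightarrow> 'i \<Rightarrow> 'i \<Rightarrow> bool" where
  "wo_lt r x y \<longleftrightarrow> (x, y) \<in> r \<and> x \<noteq> y"

text \<open>Beth assignment along a well-order r: B i is a set of cardinality beth_i,
  where i is (the ordinal of) the position of i in r.\<close>
definition beth_on :: "'i rel \<Rightarrow> ('i \<Rightarrow> 'u set) \<Rightarrow> bool" where
  "beth_on r B \<longleftrightarrow> (\<forall>i\<in>Field r.
     (if \<not> (\<exists>j. wo_lt r j i) then ordIso2 (card_of (B i)) (card_of (UNIV :: nat set))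
      else if (\<exists>j. wo_lt r j i \<and> \<not> (\<exists>k. wo_lt r j k \<and> wo_lt r k i))
      then (\<forall>j. wo_lt r j i \<and> \<not> (\<exists>k. wo_lt r j k \<and> wo_lt r k i)
                \<longrightarrow> ordIso2 (card_of (B i)) (card_of (Pow (B j))))
      else (\<forall>j. wo_lt r j i \<longrightarrow> ordLeq2 (card_of (B j)) (card_of (B i))) \<and>
           (\<forall>C :: 'u set. (\<forall>j. wo_lt r j i \<longrightarrow> ordLeq2 (card_of (B j)) (card_of C))
                \<longrightarrow> ordLeq2 (card_of (B i)) (card_of C))))"

definition wo_plus_one :: "'i rel \<Rightarrow> ('i option) rel" where
  "wo_plus_one r = map_prod Some Some ` r \<union> {(x, None) | x. x \<in> Some ` Field r \<union> {None}}"

text \<open>kappa = beth_kappa, for kappa = |K|: card_of K is a well-order of order type kappa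
  (the initial ordinal), so wo_plus_one (card_of K) has order type kappa + 1 with top None.\<close>
definition beth_fixed :: "'k set \<Rightarrow> bool" where
  "beth_fixed K \<longleftrightarrow> (\<exists>B :: 'k option \<Rightarrow> 'k set.
      beth_on (wo_plus_one (card_of K)) B \<and> ordIso2 (card_of (B None)) (card_of K))"

text \<open>Relational vocabulary: symbols Sig with arities ar. A structure is a
  (nonempty) domain together with interpretations of the relation symbols.\<close>
type_synonym ('s, 'a) struc = "'a set \<times> ('s \<Rightarrow> 'a list set)"

definition is_struc :: "'s set \<Rightarrow> ('s \<Rightarrow> nat) \<Rightarrow> ('s, 'a) struc \<Rightarrow> bool" where
  "is_struc Sig ar M \<longleftrightarrow> fst M \<noteq> {} \<and>
     (\<forall>R\<in>Sig. snd M R \<subseteq> {xs. length xs = ar R \<and> set xs \<subseteq> fst M})"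

definition partial_iso :: "'s set \<Rightarrow> ('s, 'a) struc \<Rightarrow> ('s, 'b) struc \<Rightarrow> ('a \<rightharpoonup> 'b) \<Rightarrow> bool" where
  "partial_iso Sig M N p \<longleftrightarrow> dom p \<subseteq> fst M \<and> ran p \<subseteq> fst N \<and> inj_on p (dom p) \<and>
     (\<forall>R\<in>Sig. \<forall>xs. set xs \<subseteq> dom p \<longrightarrow> (xs \<in> snd M R \<longleftrightarrow> map (the \<circ> p) xs \<in> snd N R))"

text \<open>A history of player I's moves: per round (beta_k, A_k, n_k). Sets A_k are
  tagged: A_k \<subseteq> Inl ` dom M (a subset of M) or A_k \<subseteq> Inr ` dom N (a subset of N).
  The size bound theta is represented as card_of T.\<close>
definition EF_legal :: "'o::wellorder \<Rightarrow> 'a set \<Rightarrow> 'b set \<Rightarrow> 't set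
    \<Rightarrow> ('o \<times> ('a + 'b) set \<times> nat) list \<Rightarrow> bool" where
  "EF_legal \<beta> DM DN T ms \<longleftrightarrow> (\<forall>i<length ms.
     fst (ms ! i) < (if i = 0 then \<beta> else fst (ms ! (i - 1))) \<and>
     (fst (snd (ms ! i)) \<subseteq> Inl ` DM \<or> fst (snd (ms ! i)) \<subseteq> Inr ` DN) \<and>
     ordLeq2 (card_of (fst (snd (ms ! i)))) (card_of T))"

text \<open>Player II has a winning strategy in EF^{1,c,beta}_{<= theta}(M,N), theta = |T|.
  A strategy of II: sf gives f_k from I's previous moves and (beta_k, A_k);
  sp gives pi_k from I's previous moves, (beta_k, A_k) and n_k.\<close>
definition EF_le_II_wins :: "'s set \<Rightarrow> 't set \<Rightarrow> 'o::wellorder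
    \<Rightarrow> ('s, 'a) struc \<Rightarrow> ('s, 'b) struc \<Rightarrow> bool" where
  "EF_le_II_wins Sig T \<beta> M N \<longleftrightarrow>
    (\<exists>(sf :: ('o \<times> ('a + 'b) set \<times> nat) list \<Rightarrow> 'o \<Rightarrow> ('a + 'b) set \<Rightarrow> ('a + 'b \<Rightarrow> nat))
      (sp :: ('o \<times> ('a + 'b) set \<times> nat) list \<Rightarrow> 'o \<Rightarrow> ('a + 'b) set \<Rightarrow> nat \<Rightarrow> ('a \<rightharpoonup> 'b)).
      \<forall>ms. EF_legal \<beta> (fst M) (fst N) T ms \<longrightarrow>
        (\<forall>k<length ms.
          (let (\<gamma>, A, n) = ms ! k;
               f = sf (take k ms) \<gamma> A;
               p = sp (take k ms) \<gamma> A n;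
               p0 = (if k = 0 then Map.empty
                     else (case ms ! (k - 1) of (\<gamma>', A', n') \<Rightarrow> sp (take (k - 1) ms) \<gamma>' A' n'))
           in partial_iso Sig M N p \<and> p0 \<subseteq>\<^sub>m p \<and>
              (A \<subseteq> Inl ` fst M \<longrightarrow> {a. Inl a \<in> A \<and> f (Inl a) = n} \<subseteq> dom p) \<and>
              (A \<subseteq> Inr ` fst N \<longrightarrow> {b. Inr b \<in> A \<and> f (Inr b) = n} \<subseteq> ran p))))"

text \<open>EF^{1,c,beta}_kappa(M,N), kappa = |K|: I first picks a cardinal theta < kappa
  (every such cardinal is |T| for some T \<subseteq> K); II wins iff she wins every
  EF^{1,c,beta}_{<= theta}(M,N).\<close>
definition EF_kappa_II_wins :: "'s set \<Rightarrow> 'k set \<Rightarrow> 'o::wellorder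
    \<Rightarrow> ('s, 'a) struc \<Rightarrow> ('s, 'b) struc \<Rightarrow> bool" where
  "EF_kappa_II_wins Sig K \<beta> M N \<longleftrightarrow>
    (\<forall>T. T \<subseteq> K \<longrightarrow> ordLess2 (card_of T) (card_of K) \<longrightarrow> EF_le_II_wins Sig T \<beta> M N)"

end

theory Submission
  imports Defs "HOL-Library.Nat_Bijection"
begin

definition prevo :: "'o \<Rightarrow> ('o \<times> 'x) list \<Rightarrow> 'o" where
  "prevo \<beta> h = (if h = [] then \<beta> else fst (last h))"

definition mvleg :: "'a set \<Rightarrow> 'b set \<Rightarrow> 't set \<Rightarrow> 'o::wellorder
    \<Rightarrow> ('a + 'b) set \<Rightarrow> 'o \<Rightarrow> bool" where
  "mvleg D1 D2 T \<gamma> A \<beta> \<longleftrightarrow> \<gamma> < \<beta> \<and> (A \<subseteq> Inl ` D1 \<or> A \<subseteq> Inr ` D2) \<and> ordLeq2 (card_of A) (card_of T)"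

lemma EF_legal_alt:
  "EF_legal \<beta> D1 D2 T ms \<longleftrightarrow> (\<forall>i<length ms. mvleg D1 D2 T (fst (ms!i)) (fst (snd (ms!i))) (prevo \<beta> (take i ms)))"
proof -
  have "i < length ms \<Longrightarrow> prevo \<beta> (take i ms) = (if i = 0 then \<beta> else fst (ms ! (i - 1)))" for i
    by (cases i) (auto simp: prevo_def take_Suc_conv_app_nth)
  then show ?thesis unfolding EF_legal_def mvleg_def by auto
qed

lemma EF_legal_snoc:
  "EF_legal \<beta> D1 D2 T (xs @ [(\<gamma>, A, n)]) \<longleftrightarrow> EF_legal \<beta> D1 D2 T xs \<and> \<gamma> < prevo \<beta> xs \<and>
     (A \<subseteq> Inl ` D1 \<or> A \<subseteq> Inr ` D2) \<and> ordLeq2 (card_of A) (card_of T)"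
  unfolding EF_legal_alt
  by (auto simp: nth_append less_Suc_eq mvleg_def)

lemma EF_legal_take: "EF_legal \<beta> D1 D2 T ms \<Longrightarrow> EF_legal \<beta> D1 D2 T (take j ms)"
  unfolding EF_legal_alt by (auto simp: min_def)


definition body :: "'s set \<Rightarrow> ('s, 'a) struc \<Rightarrow> ('s, 'b) struc
   \<Rightarrow> (('o \<times> ('a + 'b) set \<times> nat) list \<Rightarrow> 'o \<Rightarrow> ('a + 'b) set \<Rightarrow> ('a + 'b \<Rightarrow> nat))
   \<Rightarrow> (('o \<times> ('a + 'b) set \<times> nat) list \<Rightarrow> 'o \<Rightarrow> ('a + 'b) set \<Rightarrow> nat \<Rightarrow> ('a \<rightharpoonup> 'b))
   \<Rightarrow> ('o \<times> ('a + 'b) set \<times> nat) list \<Rightarrow> 'o \<Rightarrow> ('a + 'b) set \<Rightarrow> nat \<Rightarrow> bool" where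
  "body Sig M N sf sp xs \<gamma> A n \<longleftrightarrow> partial_iso Sig M N (sp xs \<gamma> A n) \<and>
     (if xs = [] then Map.empty else (case last xs of (\<gamma>', A', n') \<Rightarrow> sp (butlast xs) \<gamma>' A' n')) \<subseteq>\<^sub>m sp xs \<gamma> A n \<and>
     (A \<subseteq> Inl ` fst M \<longrightarrow> {a. Inl a \<in> A \<and> sf xs \<gamma> A (Inl a) = n} \<subseteq> dom (sp xs \<gamma> A n)) \<and>
     (A \<subseteq> Inr ` fst N \<longrightarrow> {b. Inr b \<in> A \<and> sf xs \<gamma> A (Inr b) = n} \<subseteq> ran (sp xs \<gamma> A n))"

lemma body_at:
  assumes "k < length ms"
  shows "(let (\<gamma>, A, n) = ms ! k;
               f = sf (take k ms) \<gamma> A;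
               p = sp (take k ms) \<gamma> A n;
               p0 = (if k = 0 then Map.empty
                     else (case ms ! (k - 1) of (\<gamma>', A', n') \<Rightarrow> sp (take (k - 1) ms) \<gamma>' A' n'))
           in partial_iso Sig M N p \<and> p0 \<subseteq>\<^sub>m p \<and>
              (A \<subseteq> Inl ` fst M \<longrightarrow> {a. Inl a \<in> A \<and> f (Inl a) = n} \<subseteq> dom p) \<and>
              (A \<subseteq> Inr ` fst N \<longrightarrow> {b. Inr b \<in> A \<and> f (Inr b) = n} \<subseteq> ran p))
     \<longleftrightarrow> body Sig M N sf sp (take k ms) (fst (ms!k)) (fst (snd (ms!k))) (snd (snd (ms!k)))"
proof -
  obtain \<gamma> A n where e: "ms ! k = (\<gamma>, A, n)" by (cases "ms ! k") auto
  have a: "(take k ms = []) = (k = 0)" using assms by auto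
  have b: "k \<noteq> 0 \<Longrightarrow> last (take k ms) = ms ! (k - 1)" using assms
    by (cases k) (auto simp: take_Suc_conv_app_nth)
  have c: "butlast (take k ms) = take (k - 1) ms" using assms by (simp add: butlast_take)
  show ?thesis unfolding body_def using a b c e by (simp add: Let_def)
qed

lemma wins_iff: "EF_le_II_wins Sig T \<beta> M N \<longleftrightarrow>
  (\<exists>sf sp. \<forall>xs \<gamma> A n. EF_legal \<beta> (fst M) (fst N) T (xs @ [(\<gamma>, A, n)]) \<longrightarrow> body Sig M N sf sp xs \<gamma> A n)"
proof
  assume "EF_le_II_wins Sig T \<beta> M N"
  then obtain sf sp where H0: "\<forall>ms. EF_legal \<beta> (fst M) (fst N) T ms \<longrightarrow> (\<forall>k<length ms.
          (let (\<gamma>, A, n) = ms ! k;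
               f = sf (take k ms) \<gamma> A;
               p = sp (take k ms) \<gamma> A n;
               p0 = (if k = 0 then Map.empty
                     else (case ms ! (k - 1) of (\<gamma>', A', n') \<Rightarrow> sp (take (k - 1) ms) \<gamma>' A' n'))
           in partial_iso Sig M N p \<and> p0 \<subseteq>\<^sub>m p \<and>
              (A \<subseteq> Inl ` fst M \<longrightarrow> {a. Inl a \<in> A \<and> f (Inl a) = n} \<subseteq> dom p) \<and>
              (A \<subseteq> Inr ` fst N \<longrightarrow> {b. Inr b \<in> A \<and> f (Inr b) = n} \<subseteq> ran p)))"
    unfolding EF_le_II_wins_def by blast
  have H: "\<forall>ms. EF_legal \<beta> (fst M) (fst N) T ms \<longrightarrow> (\<forall>k<length ms.
     body Sig M N sf sp (take k ms) (fst (ms!k)) (fst (snd (ms!k))) (snd (snd (ms!k))))"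
  proof (intro allI impI)
    fix ms k assume "EF_legal \<beta> (fst M) (fst N) T ms" "k < length ms"
    then show "body Sig M N sf sp (take k ms) (fst (ms!k)) (fst (snd (ms!k))) (snd (snd (ms!k)))"
      using H0 body_at[of k ms sf sp Sig M N] by blast
  qed
  show "\<exists>sf sp. \<forall>xs \<gamma> A n. EF_legal \<beta> (fst M) (fst N) T (xs @ [(\<gamma>, A, n)]) \<longrightarrow> body Sig M N sf sp xs \<gamma> A n"
  proof (intro exI allI impI)
    fix xs \<gamma> A n assume "EF_legal \<beta> (fst M) (fst N) T (xs @ [(\<gamma>, A, n)])"
    from H[rule_format, OF this, of "length xs"] show "body Sig M N sf sp xs \<gamma> A n" by simp
  qed
next
  assume "\<exists>sf sp. \<forall>xs \<gamma> A n. EF_legal \<beta> (fst M) (fst N) T (xs @ [(\<gamma>, A, n)]) \<longrightarrow> body Sig M N sf sp xs \<gamma> A n"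
  then obtain sf sp where H: "\<And>xs \<gamma> A n. EF_legal \<beta> (fst M) (fst N) T (xs @ [(\<gamma>, A, n)]) \<Longrightarrow> body Sig M N sf sp xs \<gamma> A n"
    by blast
  show "EF_le_II_wins Sig T \<beta> M N"
    unfolding EF_le_II_wins_def
  proof (intro exI allI impI)
    fix ms k assume L: "EF_legal \<beta> (fst M) (fst N) T ms" and k: "k < length ms"
    obtain \<gamma> A n where e: "ms ! k = (\<gamma>, A, n)" by (cases "ms ! k") auto
    have "take (Suc k) ms = take k ms @ [(\<gamma>, A, n)]" using k e by (simp add: take_Suc_conv_app_nth)
    with EF_legal_take[OF L, of "Suc k"] have "EF_legal \<beta> (fst M) (fst N) T (take k ms @ [(\<gamma>, A, n)])" by simp
    from H[OF this] e have "body Sig M N sf sp (take k ms) (fst (ms!k)) (fst (snd (ms!k))) (snd (snd (ms!k)))" by simp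
    then show "let (\<gamma>, A, n) = ms ! k;
               f = sf (take k ms) \<gamma> A;
               p = sp (take k ms) \<gamma> A n;
               p0 = (if k = 0 then Map.empty
                     else (case ms ! (k - 1) of (\<gamma>', A', n') \<Rightarrow> sp (take (k - 1) ms) \<gamma>' A' n'))
           in partial_iso Sig M N p \<and> p0 \<subseteq>\<^sub>m p \<and>
              (A \<subseteq> Inl ` fst M \<longrightarrow> {a. Inl a \<in> A \<and> f (Inl a) = n} \<subseteq> dom p) \<and>
              (A \<subseteq> Inr ` fst N \<longrightarrow> {b. Inr b \<in> A \<and> f (Inr b) = n} \<subseteq> ran p)"
      using body_at[OF k] by blast
  qed
qed


lemma partial_iso_comp:
  assumes p: "partial_iso Sig M N p" and q: "partial_iso Sig N P q"
  shows "partial_iso Sig M P (q \<circ>\<^sub>m p)"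
proof -
  have d: "dom (q \<circ>\<^sub>m p) \<subseteq> dom p" by (auto simp: map_comp_def split: option.splits)
  have dd: "x \<in> dom (q \<circ>\<^sub>m p) \<Longrightarrow> x \<in> dom p \<and> the (p x) \<in> dom q" for x
    by (auto simp: map_comp_def split: option.splits)
  have val: "x \<in> dom (q \<circ>\<^sub>m p) \<Longrightarrow> the ((q \<circ>\<^sub>m p) x) = the (q (the (p x)))" for x
    by (auto simp: map_comp_def split: option.splits)
  have r: "ran (q \<circ>\<^sub>m p) \<subseteq> ran q" by (auto simp: map_comp_def ran_def split: option.splits)
  show ?thesis unfolding partial_iso_def
  proof (intro conjI ballI allI impI)
    show "dom (q \<circ>\<^sub>m p) \<subseteq> fst M" using d p unfolding partial_iso_def by blast
    show "ran (q \<circ>\<^sub>m p) \<subseteq> fst P" using r q unfolding partial_iso_def by blast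
    show "inj_on (q \<circ>\<^sub>m p) (dom (q \<circ>\<^sub>m p))"
    proof (rule inj_onI)
      fix x y assume x: "x \<in> dom (q \<circ>\<^sub>m p)" and y: "y \<in> dom (q \<circ>\<^sub>m p)" and e: "(q \<circ>\<^sub>m p) x = (q \<circ>\<^sub>m p) y"
      from x y dd have "x \<in> dom p" "y \<in> dom p" "the (p x) \<in> dom q" "the (p y) \<in> dom q" by auto
      moreover have "q (the (p x)) = q (the (p y))" using e x y dd
        by (auto simp: map_comp_def split: option.splits)
      ultimately have "the (p x) = the (p y)" using q unfolding partial_iso_def inj_on_def by blast
      then have "p x = p y" using \<open>x \<in> dom p\<close> \<open>y \<in> dom p\<close> by auto
      then show "x = y" using p \<open>x \<in> dom p\<close> \<open>y \<in> dom p\<close> unfolding partial_iso_def inj_on_def by blast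
    qed
    fix R xs assume R: "R \<in> Sig" and xs: "set xs \<subseteq> dom (q \<circ>\<^sub>m p)"
    have 1: "set xs \<subseteq> dom p" using xs dd by auto
    have 2: "set (map (the \<circ> p) xs) \<subseteq> dom q" using xs dd by auto
    have 3: "map (the \<circ> q) (map (the \<circ> p) xs) = map (the \<circ> (q \<circ>\<^sub>m p)) xs"
      unfolding map_map
    proof (rule map_cong[OF refl])
      fix x assume "x \<in> set xs" then have "x \<in> dom (q \<circ>\<^sub>m p)" using xs by blast
      then show "((the \<circ> q) \<circ> (the \<circ> p)) x = (the \<circ> (q \<circ>\<^sub>m p)) x"
        by (simp only: comp_apply val)
    qed
    have "xs \<in> snd M R \<longleftrightarrow> map (the \<circ> p) xs \<in> snd N R" using p R 1 unfolding partial_iso_def by blast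
    also have "\<dots> \<longleftrightarrow> map (the \<circ> q) (map (the \<circ> p) xs) \<in> snd P R" using q R 2 unfolding partial_iso_def by blast
    also have "\<dots> \<longleftrightarrow> map (the \<circ> (q \<circ>\<^sub>m p)) xs \<in> snd P R" by (simp only: 3)
    finally show "xs \<in> snd M R \<longleftrightarrow> map (the \<circ> (q \<circ>\<^sub>m p)) xs \<in> snd P R" .
  qed
qed

lemma map_le_comp: "p0 \<subseteq>\<^sub>m p \<Longrightarrow> q0 \<subseteq>\<^sub>m q \<Longrightarrow> q0 \<circ>\<^sub>m p0 \<subseteq>\<^sub>m q \<circ>\<^sub>m p"
  unfolding map_le_def map_comp_def
  by (auto split: option.splits) (metis domI option.inject option.distinct(1))+


lemma prevo_eq: "map fst h = map fst h' \<Longrightarrow> prevo \<beta> h = prevo \<beta> h'"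
  unfolding prevo_def by (metis Nil_is_map_conv last_map)

lemma card_Inl_part: "ordLeq2 (card_of ({a. Inl a \<in> A})) (card_of A)"
  using card_of_ordLeq[of "{a. Inl a \<in> A}" A] by (metis (mono_tags, lifting) image_subsetI inj_Inl inj_on_subset mem_Collect_eq subset_UNIV)

lemma card_Inr_part: "ordLeq2 (card_of ({a. Inr a \<in> A})) (card_of A)"
  using card_of_ordLeq[of "{a. Inr a \<in> A}" A] by (metis (mono_tags, lifting) image_subsetI inj_Inr inj_on_subset mem_Collect_eq subset_UNIV)

lemma card_img_part_l: "ordLeq2 (card_of (f ` {a. Inl a \<in> A})) (card_of A)"
  using card_of_image card_Inl_part ordLeq_transitive by blast

lemma card_img_part_r: "ordLeq2 (card_of (f ` {a. Inr a \<in> A})) (card_of A)"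
  using card_of_image card_Inr_part ordLeq_transitive by blast

locale comp_strat =
  fixes sf1 :: "('o::wellorder \<times> ('a + 'b) set \<times> nat) list \<Rightarrow> 'o \<Rightarrow> ('a + 'b) set \<Rightarrow> ('a + 'b \<Rightarrow> nat)"
    and sp1 :: "('o \<times> ('a + 'b) set \<times> nat) list \<Rightarrow> 'o \<Rightarrow> ('a + 'b) set \<Rightarrow> nat \<Rightarrow> ('a \<rightharpoonup> 'b)"
    and sf2 :: "('o \<times> ('b + 'c) set \<times> nat) list \<Rightarrow> 'o \<Rightarrow> ('b + 'c) set \<Rightarrow> ('b + 'c \<Rightarrow> nat)"
    and sp2 :: "('o \<times> ('b + 'c) set \<times> nat) list \<Rightarrow> 'o \<Rightarrow> ('b + 'c) set \<Rightarrow> nat \<Rightarrow> ('b \<rightharpoonup> 'c)"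
begin

definition LA1 :: "('a + 'c) set \<Rightarrow> ('a + 'b) set" where
  "LA1 A = Inl ` {a. Inl a \<in> A}"

definition Limg :: "('o \<times> ('a + 'b) set \<times> nat) list \<Rightarrow> 'o \<Rightarrow> ('a + 'c) set \<Rightarrow> 'a \<Rightarrow> 'b" where
  "Limg mn \<gamma> A a = the (sp1 mn \<gamma> (LA1 A) (sf1 mn \<gamma> (LA1 A) (Inl a)) a)"

definition LB :: "('o \<times> ('a + 'b) set \<times> nat) list \<Rightarrow> 'o \<Rightarrow> ('a + 'c) set \<Rightarrow> ('b + 'c) set" where
  "LB mn \<gamma> A = (\<lambda>a. Inl (Limg mn \<gamma> A a)) ` {a. Inl a \<in> A}"

definition RA2 :: "('a + 'c) set \<Rightarrow> ('b + 'c) set" where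
  "RA2 A = Inr ` {c. Inr c \<in> A}"

definition Rpre :: "('o \<times> ('b + 'c) set \<times> nat) list \<Rightarrow> 'o \<Rightarrow> ('a + 'c) set \<Rightarrow> 'c \<Rightarrow> 'b" where
  "Rpre np \<gamma> A c = (SOME b. sp2 np \<gamma> (RA2 A) (sf2 np \<gamma> (RA2 A) (Inr c)) b = Some c)"

definition RB :: "('o \<times> ('b + 'c) set \<times> nat) list \<Rightarrow> 'o \<Rightarrow> ('a + 'c) set \<Rightarrow> ('a + 'b) set" where
  "RB np \<gamma> A = (\<lambda>c. Inr (Rpre np \<gamma> A c)) ` {c. Inr c \<in> A}"

definition stepf :: "('o \<times> ('a + 'b) set \<times> nat) list \<Rightarrow> ('o \<times> ('b + 'c) set \<times> nat) list
   \<Rightarrow> 'o \<Rightarrow> ('a + 'c) set \<Rightarrow> nat \<Rightarrow> ('o \<times> ('a + 'b) set \<times> nat) \<times> ('o \<times> ('b + 'c) set \<times> nat)" where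
  "stepf mn np \<gamma> A n =
    (if A \<subseteq> range Inl then ((\<gamma>, LA1 A, fst (prod_decode n)), (\<gamma>, LB mn \<gamma> A, snd (prod_decode n)))
     else ((\<gamma>, RB np \<gamma> A, snd (prod_decode n)), (\<gamma>, RA2 A, fst (prod_decode n))))"

definition colorf :: "('o \<times> ('a + 'b) set \<times> nat) list \<Rightarrow> ('o \<times> ('b + 'c) set \<times> nat) list
   \<Rightarrow> 'o \<Rightarrow> ('a + 'c) set \<Rightarrow> 'a + 'c \<Rightarrow> nat" where
  "colorf mn np \<gamma> A x =
    (if A \<subseteq> range Inl then
       (case x of Inl a \<Rightarrow> prod_encode (sf1 mn \<gamma> (LA1 A) (Inl a), sf2 np \<gamma> (LB mn \<gamma> A) (Inl (Limg mn \<gamma> A a)))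
        | Inr c \<Rightarrow> 0)
     else (case x of Inr c \<Rightarrow> prod_encode (sf2 np \<gamma> (RA2 A) (Inr c), sf1 mn \<gamma> (RB np \<gamma> A) (Inr (Rpre np \<gamma> A c)))
        | Inl a \<Rightarrow> 0))"

definition cmap :: "('o \<times> ('a + 'b) set \<times> nat) list \<Rightarrow> ('o \<times> ('b + 'c) set \<times> nat) list
   \<Rightarrow> 'o \<Rightarrow> ('a + 'c) set \<Rightarrow> nat \<Rightarrow> ('a \<rightharpoonup> 'c)" where
  "cmap mn np \<gamma> A n = (let s = stepf mn np \<gamma> A n in
     sp2 np (fst (snd s)) (fst (snd (snd s))) (snd (snd (snd s))) \<circ>\<^sub>m sp1 mn (fst (fst s)) (fst (snd (fst s))) (snd (snd (fst s))))"

definition sim :: "('o \<times> ('a + 'c) set \<times> nat) list \<Rightarrow> ('o \<times> ('a + 'b) set \<times> nat) list \<times> ('o \<times> ('b + 'c) set \<times> nat) list" where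
  "sim xs = foldl (\<lambda>(mn, np) (\<gamma>, A, n). (mn @ [fst (stepf mn np \<gamma> A n)], np @ [snd (stepf mn np \<gamma> A n)])) ([], []) xs"

definition cf :: "('o \<times> ('a + 'c) set \<times> nat) list \<Rightarrow> 'o \<Rightarrow> ('a + 'c) set \<Rightarrow> 'a + 'c \<Rightarrow> nat" where
  "cf xs \<gamma> A = colorf (fst (sim xs)) (snd (sim xs)) \<gamma> A"

definition cp :: "('o \<times> ('a + 'c) set \<times> nat) list \<Rightarrow> 'o \<Rightarrow> ('a + 'c) set \<Rightarrow> nat \<Rightarrow> ('a \<rightharpoonup> 'c)" where
  "cp xs \<gamma> A n = cmap (fst (sim xs)) (snd (sim xs)) \<gamma> A n"

lemma sim_Nil: "sim [] = ([], [])" by (simp add: sim_def)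

lemma sim_snoc: "sim (xs @ [(\<gamma>, A, n)]) =
   (fst (sim xs) @ [fst (stepf (fst (sim xs)) (snd (sim xs)) \<gamma> A n)],
    snd (sim xs) @ [snd (stepf (fst (sim xs)) (snd (sim xs)) \<gamma> A n)])"
  unfolding sim_def by (simp split: prod.split)

lemma stepf_fst: "fst (fst (stepf mn np \<gamma> A n)) = \<gamma>" "fst (snd (stepf mn np \<gamma> A n)) = \<gamma>"
  by (simp_all add: stepf_def)

lemma sim_map_fst: "map fst (fst (sim xs)) = map fst xs \<and> map fst (snd (sim xs)) = map fst xs"
proof (induction xs rule: rev_induct)
  case Nil then show ?case by (simp add: sim_Nil)
next
  case (snoc x xs)
  obtain \<gamma> A n where x: "x = (\<gamma>, A, n)" by (cases x) auto
  show ?case using snoc by (simp add: x sim_snoc stepf_fst)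
qed

end

locale comp_win = comp_strat sf1 sp1 sf2 sp2
  for sf1 :: "('o::wellorder \<times> ('a + 'b) set \<times> nat) list \<Rightarrow> 'o \<Rightarrow> ('a + 'b) set \<Rightarrow> ('a + 'b \<Rightarrow> nat)"
    and sp1 :: "('o \<times> ('a + 'b) set \<times> nat) list \<Rightarrow> 'o \<Rightarrow> ('a + 'b) set \<Rightarrow> nat \<Rightarrow> ('a \<rightharpoonup> 'b)"
    and sf2 :: "('o \<times> ('b + 'c) set \<times> nat) list \<Rightarrow> 'o \<Rightarrow> ('b + 'c) set \<Rightarrow> ('b + 'c \<Rightarrow> nat)"
    and sp2 :: "('o \<times> ('b + 'c) set \<times> nat) list \<Rightarrow> 'o \<Rightarrow> ('b + 'c) set \<Rightarrow> nat \<Rightarrow> ('b \<rightharpoonup> 'c)" +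
  fixes Sig :: "'s set" and M :: "('s, 'a) struc" and N :: "('s, 'b) struc" and P :: "('s, 'c) struc"
    and \<beta> :: 'o and T :: "'t set"
  assumes W1: "\<And>xs \<gamma> A n. EF_legal \<beta> (fst M) (fst N) T (xs @ [(\<gamma>, A, n)]) \<Longrightarrow> body Sig M N sf1 sp1 xs \<gamma> A n"
    and W2: "\<And>xs \<gamma> A n. EF_legal \<beta> (fst N) (fst P) T (xs @ [(\<gamma>, A, n)]) \<Longrightarrow> body Sig N P sf2 sp2 xs \<gamma> A n"
begin

lemma stepL:
  assumes L1: "EF_legal \<beta> (fst M) (fst N) T mn" and L2: "EF_legal \<beta> (fst N) (fst P) T np"
    and g1: "\<gamma> < prevo \<beta> mn" and g2: "\<gamma> < prevo \<beta> np"
    and AA: "A \<subseteq> Inl ` fst M \<or> A \<subseteq> Inr ` fst P" and rl: "A \<subseteq> range Inl"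
    and c: "ordLeq2 (card_of A) (card_of T)"
  shows "EF_legal \<beta> (fst M) (fst N) T (mn @ [fst (stepf mn np \<gamma> A n)]) \<and>
    EF_legal \<beta> (fst N) (fst P) T (np @ [snd (stepf mn np \<gamma> A n)]) \<and>
    partial_iso Sig M P (cmap mn np \<gamma> A n) \<and>
    (A \<subseteq> Inl ` fst M \<longrightarrow> {a. Inl a \<in> A \<and> colorf mn np \<gamma> A (Inl a) = n} \<subseteq> dom (cmap mn np \<gamma> A n)) \<and>
    (A \<subseteq> Inr ` fst P \<longrightarrow> {c. Inr c \<in> A \<and> colorf mn np \<gamma> A (Inr c) = n} \<subseteq> ran (cmap mn np \<gamma> A n))"
proof -
  have A: "A \<subseteq> Inl ` fst M" using AA rl by auto
  define A1 where "A1 = LA1 A"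
  define f where "f = sf1 mn \<gamma> A1"
  define B where "B = LB mn \<gamma> A"
  define g where "g = sf2 np \<gamma> B"
  have A1M: "A1 \<subseteq> Inl ` fst M" using A by (auto simp: A1_def LA1_def)
  have cA1: "ordLeq2 (card_of A1) (card_of T)"
    unfolding A1_def LA1_def using card_img_part_l c ordLeq_transitive by blast
  have leg1: "EF_legal \<beta> (fst M) (fst N) T (mn @ [(\<gamma>, A1, m)])" for m
    using L1 g1 A1M cA1 by (simp add: EF_legal_snoc)
  have B1: "body Sig M N sf1 sp1 mn \<gamma> A1 m" for m using W1[OF leg1] .
  have cov: "sp1 mn \<gamma> A1 (f (Inl a)) a = Some (Limg mn \<gamma> A a)" if "Inl a \<in> A" for a
  proof -
    have "Inl a \<in> A1" using that by (simp add: A1_def LA1_def)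
    then have "a \<in> dom (sp1 mn \<gamma> A1 (f (Inl a)))" using B1[of "f (Inl a)"] A1M
      unfolding body_def f_def by blast
    then show ?thesis by (auto simp: Limg_def A1_def f_def)
  qed
  have inN: "Limg mn \<gamma> A a \<in> fst N" if "Inl a \<in> A" for a
  proof -
    have "Limg mn \<gamma> A a \<in> ran (sp1 mn \<gamma> A1 (f (Inl a)))" using cov[OF that] by (auto simp: ran_def)
    then show ?thesis using B1[of "f (Inl a)"] unfolding body_def partial_iso_def by blast
  qed
  have BN: "B \<subseteq> Inl ` fst N" using inN by (auto simp: B_def LB_def)
  have cB: "ordLeq2 (card_of B) (card_of T)"
    unfolding B_def LB_def using card_img_part_l c ordLeq_transitive by blast
  have leg2: "EF_legal \<beta> (fst N) (fst P) T (np @ [(\<gamma>, B, m)])" for m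
    using L2 g2 BN cB by (simp add: EF_legal_snoc)
  have B2: "body Sig N P sf2 sp2 np \<gamma> B m" for m using W2[OF leg2] .
  have st: "stepf mn np \<gamma> A n = ((\<gamma>, A1, fst (prod_decode n)), (\<gamma>, B, snd (prod_decode n)))"
    using rl by (simp add: stepf_def A1_def B_def)
  have cm: "cmap mn np \<gamma> A n = sp2 np \<gamma> B (snd (prod_decode n)) \<circ>\<^sub>m sp1 mn \<gamma> A1 (fst (prod_decode n))"
    by (simp add: cmap_def st)
  have pi: "partial_iso Sig M P (cmap mn np \<gamma> A n)"
    unfolding cm using B1 B2 partial_iso_comp unfolding body_def by blast
  have covL: "{a. Inl a \<in> A \<and> colorf mn np \<gamma> A (Inl a) = n} \<subseteq> dom (cmap mn np \<gamma> A n)"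
  proof
    fix a assume "a \<in> {a. Inl a \<in> A \<and> colorf mn np \<gamma> A (Inl a) = n}"
    then have a: "Inl a \<in> A" and col: "prod_encode (f (Inl a), g (Inl (Limg mn \<gamma> A a))) = n"
      using rl by (auto simp: colorf_def f_def g_def A1_def B_def)
    have dn: "prod_decode n = (f (Inl a), g (Inl (Limg mn \<gamma> A a)))"
      using col prod_encode_inverse by metis
    have s1: "sp1 mn \<gamma> A1 (fst (prod_decode n)) a = Some (Limg mn \<gamma> A a)" using cov[OF a] dn by simp
    have "Inl (Limg mn \<gamma> A a) \<in> B" using a by (auto simp: B_def LB_def)
    then have "Limg mn \<gamma> A a \<in> dom (sp2 np \<gamma> B (snd (prod_decode n)))"
      using B2[of "snd (prod_decode n)"] BN dn unfolding body_def g_def by auto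
    then show "a \<in> dom (cmap mn np \<gamma> A n)" unfolding cm using s1 by (auto simp: map_comp_def)
  qed
  have covR: "{c. Inr c \<in> A \<and> colorf mn np \<gamma> A (Inr c) = n} = {}" using rl by auto
  show ?thesis unfolding covR using leg1 leg2 st pi covL by simp
qed

lemma stepR:
  assumes L1: "EF_legal \<beta> (fst M) (fst N) T mn" and L2: "EF_legal \<beta> (fst N) (fst P) T np"
    and g1: "\<gamma> < prevo \<beta> mn" and g2: "\<gamma> < prevo \<beta> np"
    and AA: "A \<subseteq> Inl ` fst M \<or> A \<subseteq> Inr ` fst P" and rl: "\<not> A \<subseteq> range Inl"
    and c: "ordLeq2 (card_of A) (card_of T)"
  shows "EF_legal \<beta> (fst M) (fst N) T (mn @ [fst (stepf mn np \<gamma> A n)]) \<and>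
    EF_legal \<beta> (fst N) (fst P) T (np @ [snd (stepf mn np \<gamma> A n)]) \<and>
    partial_iso Sig M P (cmap mn np \<gamma> A n) \<and>
    (A \<subseteq> Inl ` fst M \<longrightarrow> {a. Inl a \<in> A \<and> colorf mn np \<gamma> A (Inl a) = n} \<subseteq> dom (cmap mn np \<gamma> A n)) \<and>
    (A \<subseteq> Inr ` fst P \<longrightarrow> {c. Inr c \<in> A \<and> colorf mn np \<gamma> A (Inr c) = n} \<subseteq> ran (cmap mn np \<gamma> A n))"
proof -
  have A: "A \<subseteq> Inr ` fst P" using AA rl by auto
  have nL: "\<not> A \<subseteq> Inl ` fst M" using rl by auto
  define A2 where "A2 = RA2 A"
  define g where "g = sf2 np \<gamma> A2"
  define B where "B = RB np \<gamma> A"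
  define f where "f = sf1 mn \<gamma> B"
  have A2P: "A2 \<subseteq> Inr ` fst P" using A by (auto simp: A2_def RA2_def)
  have cA2: "ordLeq2 (card_of A2) (card_of T)"
    unfolding A2_def RA2_def using card_img_part_r c ordLeq_transitive by blast
  have leg2: "EF_legal \<beta> (fst N) (fst P) T (np @ [(\<gamma>, A2, m)])" for m
    using L2 g2 A2P cA2 by (simp add: EF_legal_snoc)
  have B2: "body Sig N P sf2 sp2 np \<gamma> A2 m" for m using W2[OF leg2] .
  have cov: "sp2 np \<gamma> A2 (g (Inr c)) (Rpre np \<gamma> A c) = Some c" if "Inr c \<in> A" for c
  proof -
    have "Inr c \<in> A2" using that by (simp add: A2_def RA2_def)
    then have "c \<in> ran (sp2 np \<gamma> A2 (g (Inr c)))" using B2[of "g (Inr c)"] A2P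
      unfolding body_def g_def by blast
    then have "\<exists>b. sp2 np \<gamma> A2 (g (Inr c)) b = Some c" by (auto simp: ran_def)
    then show ?thesis unfolding Rpre_def A2_def g_def by (rule someI_ex)
  qed
  have inN: "Rpre np \<gamma> A c \<in> fst N" if "Inr c \<in> A" for c
  proof -
    have "Rpre np \<gamma> A c \<in> dom (sp2 np \<gamma> A2 (g (Inr c)))" using cov[OF that] by auto
    then show ?thesis using B2[of "g (Inr c)"] unfolding body_def partial_iso_def by blast
  qed
  have BN: "B \<subseteq> Inr ` fst N" using inN by (auto simp: B_def RB_def)
  have cB: "ordLeq2 (card_of B) (card_of T)"
    unfolding B_def RB_def using card_img_part_r c ordLeq_transitive by blast
  have leg1: "EF_legal \<beta> (fst M) (fst N) T (mn @ [(\<gamma>, B, m)])" for m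
    using L1 g1 BN cB by (simp add: EF_legal_snoc)
  have B1: "body Sig M N sf1 sp1 mn \<gamma> B m" for m using W1[OF leg1] .
  have st: "stepf mn np \<gamma> A n = ((\<gamma>, B, snd (prod_decode n)), (\<gamma>, A2, fst (prod_decode n)))"
    using rl by (simp add: stepf_def A2_def B_def)
  have cm: "cmap mn np \<gamma> A n = sp2 np \<gamma> A2 (fst (prod_decode n)) \<circ>\<^sub>m sp1 mn \<gamma> B (snd (prod_decode n))"
    by (simp add: cmap_def st)
  have pi: "partial_iso Sig M P (cmap mn np \<gamma> A n)"
    unfolding cm using B1 B2 partial_iso_comp unfolding body_def by blast
  have covR: "{c. Inr c \<in> A \<and> colorf mn np \<gamma> A (Inr c) = n} \<subseteq> ran (cmap mn np \<gamma> A n)"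
  proof
    fix c assume "c \<in> {c. Inr c \<in> A \<and> colorf mn np \<gamma> A (Inr c) = n}"
    then have a: "Inr c \<in> A" and col: "prod_encode (g (Inr c), f (Inr (Rpre np \<gamma> A c))) = n"
      using rl by (auto simp: colorf_def f_def g_def A2_def B_def)
    have dn: "prod_decode n = (g (Inr c), f (Inr (Rpre np \<gamma> A c)))"
      using col prod_encode_inverse by metis
    have s2: "sp2 np \<gamma> A2 (fst (prod_decode n)) (Rpre np \<gamma> A c) = Some c" using cov[OF a] dn by simp
    have "Inr (Rpre np \<gamma> A c) \<in> B" using a by (auto simp: B_def RB_def)
    then have "Rpre np \<gamma> A c \<in> ran (sp1 mn \<gamma> B (snd (prod_decode n)))"
      using B1[of "snd (prod_decode n)"] BN dn unfolding body_def f_def by auto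
    then obtain a' where "sp1 mn \<gamma> B (snd (prod_decode n)) a' = Some (Rpre np \<gamma> A c)"
      by (auto simp: ran_def)
    then have "cmap mn np \<gamma> A n a' = Some c" unfolding cm using s2 by (simp add: map_comp_def)
    then show "c \<in> ran (cmap mn np \<gamma> A n)" by (auto simp: ran_def)
  qed
  show ?thesis using leg1 leg2 st pi covR nL by simp
qed


lemma step:
  assumes L1: "EF_legal \<beta> (fst M) (fst N) T mn" and L2: "EF_legal \<beta> (fst N) (fst P) T np"
    and g1: "\<gamma> < prevo \<beta> mn" and g2: "\<gamma> < prevo \<beta> np"
    and AA: "A \<subseteq> Inl ` fst M \<or> A \<subseteq> Inr ` fst P"
    and c: "ordLeq2 (card_of A) (card_of T)"
  shows "EF_legal \<beta> (fst M) (fst N) T (mn @ [fst (stepf mn np \<gamma> A n)]) \<and>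
    EF_legal \<beta> (fst N) (fst P) T (np @ [snd (stepf mn np \<gamma> A n)]) \<and>
    partial_iso Sig M P (cmap mn np \<gamma> A n) \<and>
    (A \<subseteq> Inl ` fst M \<longrightarrow> {a. Inl a \<in> A \<and> colorf mn np \<gamma> A (Inl a) = n} \<subseteq> dom (cmap mn np \<gamma> A n)) \<and>
    (A \<subseteq> Inr ` fst P \<longrightarrow> {c. Inr c \<in> A \<and> colorf mn np \<gamma> A (Inr c) = n} \<subseteq> ran (cmap mn np \<gamma> A n))"
  using stepL[OF assms(1-5) _ c] stepR[OF assms(1-5) _ c] by blast

lemma sim_legal: "EF_legal \<beta> (fst M) (fst P) T xs \<Longrightarrow>
   EF_legal \<beta> (fst M) (fst N) T (fst (sim xs)) \<and> EF_legal \<beta> (fst N) (fst P) T (snd (sim xs))"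
proof (induction xs rule: rev_induct)
  case Nil then show ?case by (simp add: sim_Nil EF_legal_def)
next
  case (snoc x xs)
  obtain \<gamma> A n where x: "x = (\<gamma>, A, n)" by (cases x) auto
  from snoc.prems x have L: "EF_legal \<beta> (fst M) (fst P) T xs" and g: "\<gamma> < prevo \<beta> xs"
    and AA: "A \<subseteq> Inl ` fst M \<or> A \<subseteq> Inr ` fst P" and c: "ordLeq2 (card_of A) (card_of T)"
    by (simp_all add: EF_legal_snoc)
  from snoc.IH[OF L] have L1: "EF_legal \<beta> (fst M) (fst N) T (fst (sim xs))"
    and L2: "EF_legal \<beta> (fst N) (fst P) T (snd (sim xs))" by auto
  have g1: "\<gamma> < prevo \<beta> (fst (sim xs))" using g prevo_eq sim_map_fst by metis
  have g2: "\<gamma> < prevo \<beta> (snd (sim xs))" using g prevo_eq sim_map_fst by metis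
  show ?case using step[OF L1 L2 g1 g2 AA c, of n] by (simp add: x sim_snoc)
qed

lemma comp_body:
  assumes LL: "EF_legal \<beta> (fst M) (fst P) T (xs @ [(\<gamma>, A, n)])"
  shows "body Sig M P cf cp xs \<gamma> A n"
proof -
  from LL have L: "EF_legal \<beta> (fst M) (fst P) T xs" and g: "\<gamma> < prevo \<beta> xs"
    and AA: "A \<subseteq> Inl ` fst M \<or> A \<subseteq> Inr ` fst P" and c: "ordLeq2 (card_of A) (card_of T)"
    by (simp_all add: EF_legal_snoc)
  define mn where "mn = fst (sim xs)"
  define np where "np = snd (sim xs)"
  from sim_legal[OF L] have L1: "EF_legal \<beta> (fst M) (fst N) T mn"
    and L2: "EF_legal \<beta> (fst N) (fst P) T np" by (auto simp: mn_def np_def)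
  have g1: "\<gamma> < prevo \<beta> mn" using g prevo_eq sim_map_fst unfolding mn_def by metis
  have g2: "\<gamma> < prevo \<beta> np" using g prevo_eq sim_map_fst unfolding np_def by metis
  note S = step[OF L1 L2 g1 g2 AA c, of n]
  define s where "s = stepf mn np \<gamma> A n"
  have cpe: "cp xs \<gamma> A n = sp2 np (fst (snd s)) (fst (snd (snd s))) (snd (snd (snd s))) \<circ>\<^sub>m
      sp1 mn (fst (fst s)) (fst (snd (fst s))) (snd (snd (fst s)))"
    by (simp add: cp_def cmap_def s_def mn_def np_def Let_def)
  have ext: "(if xs = [] then Map.empty else (case last xs of (\<gamma>', A', n') \<Rightarrow> cp (butlast xs) \<gamma>' A' n'))
     \<subseteq>\<^sub>m cp xs \<gamma> A n"
  proof (cases xs rule: rev_exhaust)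
    case Nil then show ?thesis by (simp add: map_le_def)
  next
    case (snoc ys y)
    obtain \<gamma>' A' n' where y: "y = (\<gamma>', A', n')" by (cases y) auto
    define s' where "s' = stepf (fst (sim ys)) (snd (sim ys)) \<gamma>' A' n'"
    have mne: "mn = fst (sim ys) @ [fst s']" and npe: "np = snd (sim ys) @ [snd s']"
      by (simp_all add: mn_def np_def snoc y sim_snoc s'_def)
    have l1: "EF_legal \<beta> (fst M) (fst N) T (mn @ [(fst (fst s), fst (snd (fst s)), snd (snd (fst s)))])"
      using S by (simp add: s_def)
    have l2: "EF_legal \<beta> (fst N) (fst P) T (np @ [(fst (snd s), fst (snd (snd s)), snd (snd (snd s)))])"
      using S by (simp add: s_def)
    have e1: "sp1 (fst (sim ys)) (fst (fst s')) (fst (snd (fst s'))) (snd (snd (fst s')))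
        \<subseteq>\<^sub>m sp1 mn (fst (fst s)) (fst (snd (fst s))) (snd (snd (fst s)))"
      using W1[OF l1] unfolding body_def by (simp add: mne split: prod.splits)
    have e2: "sp2 (snd (sim ys)) (fst (snd s')) (fst (snd (snd s'))) (snd (snd (snd s')))
        \<subseteq>\<^sub>m sp2 np (fst (snd s)) (fst (snd (snd s))) (snd (snd (snd s)))"
      using W2[OF l2] unfolding body_def by (simp add: npe split: prod.splits)
    have p0: "cp ys \<gamma>' A' n' = sp2 (snd (sim ys)) (fst (snd s')) (fst (snd (snd s'))) (snd (snd (snd s'))) \<circ>\<^sub>m
      sp1 (fst (sim ys)) (fst (fst s')) (fst (snd (fst s'))) (snd (snd (fst s')))"
      by (simp add: cp_def cmap_def s'_def Let_def)
    show ?thesis unfolding cpe using map_le_comp[OF e1 e2] by (simp add: snoc y p0)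
  qed
  show ?thesis unfolding body_def
    using S ext by (simp add: cf_def cp_def mn_def np_def)
qed

end

theorem mainTheorem3:
  fixes K :: "'k set" and Sig :: "'s set" and ar :: "'s \<Rightarrow> nat" and \<beta> :: "'o::wellorder"
    and M :: "('s, 'a) struc" and N :: "('s, 'b) struc" and P :: "('s, 'c) struc"
  assumes "beth_fixed K"
    and "ordLess2 (card_of Sig) (card_of K)"
    and "is_struc Sig ar M" and "is_struc Sig ar N" and "is_struc Sig ar P"
    and "EF_kappa_II_wins Sig K \<beta> M N"
    and "EF_kappa_II_wins Sig K \<beta> N P"
  shows "EF_kappa_II_wins Sig K \<beta> M P"
  unfolding EF_kappa_II_wins_def
proof (intro allI impI)
  fix T :: "'k set" assume T: "T \<subseteq> K" "ordLess2 (card_of T) (card_of K)"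
  have "EF_le_II_wins Sig T \<beta> M N" using assms(6) T unfolding EF_kappa_II_wins_def by blast
  then obtain sf1 sp1 where W1: "\<And>xs \<gamma> A n. EF_legal \<beta> (fst M) (fst N) T (xs @ [(\<gamma>, A, n)]) \<Longrightarrow> body Sig M N sf1 sp1 xs \<gamma> A n"
    unfolding wins_iff by blast
  have "EF_le_II_wins Sig T \<beta> N P" using assms(7) T unfolding EF_kappa_II_wins_def by blast
  then obtain sf2 sp2 where W2: "\<And>xs \<gamma> A n. EF_legal \<beta> (fst N) (fst P) T (xs @ [(\<gamma>, A, n)]) \<Longrightarrow> body Sig N P sf2 sp2 xs \<gamma> A n"
    unfolding wins_iff by blast
  interpret cw: comp_win sf1 sp1 sf2 sp2 Sig M N P \<beta> T
    by unfold_locales (rule W1, assumption, rule W2, assumption)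
  show "EF_le_II_wins Sig T \<beta> M P"
    unfolding wins_iff using cw.comp_body by blast
qed

end
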